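(* Every finite nonempty set of integers is the signed degree set of some connected signed bipartite graph.
   Context: A signed bipartite graph $G(U,V)$ is a finite simple bipartite graph with bipartition $U, V$ (both nonempty, every edge joining a vertex of $U$ to a vertex of $V$) in which each edge is assigned a sign, positive or negative. The signed degree of a vertex $x$ is $\mathrm{sdeg}(x) = d^+(x) - d^-(x)$, where $d^+(x)$ (resp. $d^-(x)$) is the number of positive (resp. negative) edges incident with $x$. The signed degree set of $G(U,V)$ is the set of distinct signed degrees of its vertices. $G(U,V)$ is called connected if each vertex of $U$ is connected (by a path) to every vertex of $V$. *)

theory Defs
  imports Main
begin

text \<open>P is the set of positive edges, N the set of negative edges; an edge is a pair (u,v)
  with u in U and v in V. Simplicity: each edge occurs at most once and carries one sign.\<close>

definition signed_bipartite :: "nat set \<Rightarrow> nat set \<Rightarrow> (nat \<times> nat) set \<Rightarrow> (nat \<times> nat) set \<Rightarrow> bool" where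
  "signed_bipartite U V P N \<longleftrightarrow>
     finite U \<and> finite V \<and> U \<noteq> {} \<and> V \<noteq> {} \<and> U \<inter> V = {} \<and>
     P \<subseteq> U \<times> V \<and> N \<subseteq> U \<times> V \<and> P \<inter> N = {}"

definition inc_deg :: "(nat \<times> nat) set \<Rightarrow> nat \<Rightarrow> nat" where
  "inc_deg E x = card {y. (x, y) \<in> E \<or> (y, x) \<in> E}"

definition sdeg :: "(nat \<times> nat) set \<Rightarrow> (nat \<times> nat) set \<Rightarrow> nat \<Rightarrow> int" where
  "sdeg P N x = int (inc_deg P x) - int (inc_deg N x)"

definition signed_degree_set :: "nat set \<Rightarrow> nat set \<Rightarrow> (nat \<times> nat) set \<Rightarrow> (nat \<times> nat) set \<Rightarrow> int set" where
  "signed_degree_set U V P N = sdeg P N ` (U \<union> V)"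

definition sb_connected :: "nat set \<Rightarrow> nat set \<Rightarrow> (nat \<times> nat) set \<Rightarrow> (nat \<times> nat) set \<Rightarrow> bool" where
  "sb_connected U V P N \<longleftrightarrow>
     (\<forall>u\<in>U. \<forall>v\<in>V. (u, v) \<in> ((P \<union> N) \<union> (P \<union> N)\<inverse>)\<^sup>*)"

end

theory Submission imports Defs begin


definition nb :: "(nat \<times> nat) set \<Rightarrow> nat \<Rightarrow> nat set" where
  "nb E x = {y. (x, y) \<in> E \<or> (y, x) \<in> E}"

lemma inc_deg_nb: "inc_deg E x = card (nb E x)"
  by (simp add: inc_deg_def nb_def)

lemma conn_remove:
  assumes "(w, z) \<in> (E \<union> E\<inverse>)\<^sup>*"
  shows "(w, z) \<in> ((E - {(a,b)}) \<union> (E - {(a,b)})\<inverse>)\<^sup>* \<or> (w, a) \<in> ((E - {(a,b)}) \<union> (E - {(a,b)})\<inverse>)\<^sup>*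
     \<or> (w, b) \<in> ((E - {(a,b)}) \<union> (E - {(a,b)})\<inverse>)\<^sup>*"
  using assms
proof (induction rule: converse_rtrancl_induct)
  case base
  then show ?case by simp
next
  case (step y y1)
  let ?R = "(E - {(a,b)}) \<union> (E - {(a,b)})\<inverse>"
  show ?case
  proof (cases "(y, y1) \<in> ?R")
    case True
    then show ?thesis using step.IH by (meson converse_rtrancl_into_rtrancl)
  next
    case False
    then have "y = a \<or> y = b" using step.hyps(1) by auto
    then show ?thesis by auto
  qed
qed

lemma conn_sym:
  assumes "(x, y) \<in> (E \<union> E\<inverse>)\<^sup>*" shows "(y, x) \<in> (E \<union> E\<inverse>)\<^sup>*"
proof -
  have "(y, x) \<in> ((E \<union> E\<inverse>)\<inverse>)\<^sup>*" using assms by (simp add: rtrancl_converse)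
  moreover have "(E \<union> E\<inverse>)\<inverse> = E \<union> E\<inverse>" by auto
  ultimately show ?thesis by simp
qed

lemma conn_mono:
  assumes "(x, y) \<in> (E \<union> E\<inverse>)\<^sup>*" "E \<subseteq> F" shows "(x, y) \<in> (F \<union> F\<inverse>)\<^sup>*"
proof -
  have "E \<union> E\<inverse> \<subseteq> F \<union> F\<inverse>" using assms(2) by auto
  then show ?thesis using assms(1) rtrancl_mono by blast
qed

lemma conn_edge:
  assumes "(x, y) \<in> E \<or> (y, x) \<in> E" shows "(x, y) \<in> (E \<union> E\<inverse>)\<^sup>*"
  using assms by auto

lemma complete_minus_conn:
  assumes "u \<in> U" "u' \<in> U" "u \<noteq> u'" "v \<in> V" "v' \<in> V" "v \<noteq> v'"
    and "U \<times> V - {(a, b)} \<subseteq> E" and "x \<in> U" "y \<in> V"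
  shows "(x, y) \<in> (E \<union> E\<inverse>)\<^sup>*"
proof (cases "(x, y) = (a, b)")
  case False
  then show ?thesis using assms by (intro conn_edge) auto
next
  case True
  obtain x' where x': "x' \<in> U" "x' \<noteq> x" using assms by metis
  obtain y' where y': "y' \<in> V" "y' \<noteq> y" using assms by metis
  have "(x, y') \<in> (E \<union> E\<inverse>)\<^sup>*" using assms True x' y' by (intro conn_edge) auto
  moreover have "(y', x') \<in> (E \<union> E\<inverse>)\<^sup>*" using assms True x' y' by (intro conn_edge) auto
  moreover have "(x', y) \<in> (E \<union> E\<inverse>)\<^sup>*" using assms True x' y' by (intro conn_edge) auto
  ultimately show ?thesis by (meson rtrancl_trans)
qed


lemma gadget:
  fixes t :: int and M :: nat
  shows "\<exists>U2 V2 P2 N2 u2 v2. signed_bipartite U2 V2 P2 N2 \<and> sb_connected U2 V2 (P2 - {(u2,v2)}) N2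
     \<and> (u2, v2) \<in> P2 \<and> U2 \<union> V2 \<subseteq> {M..} \<and> (\<forall>x\<in>U2 \<union> V2. sdeg P2 N2 x = t)"
proof -
  define n where "n = nat \<bar>t\<bar> + 2"
  define f where "f i = M + i" for i
  define g where "g j = M + n + j" for j
  define U2 where "U2 = f ` {..<n}"
  define V2 where "V2 = g ` {..<n}"
  define Eo where "Eo = {(f i, g j) | i j. i < n \<and> j < n \<and> i \<noteq> j}"
  define Ed where "Ed = {(f i, g i) | i. i < n}"
  have n2: "n \<ge> 2" unfolding n_def by simp
  have UV: "U2 \<inter> V2 = {}" unfolding U2_def V2_def f_def g_def by auto
  have Eo_sub: "Eo \<subseteq> U2 \<times> V2" unfolding Eo_def U2_def V2_def by auto
  have Ed_sub: "Ed \<subseteq> U2 \<times> V2" unfolding Ed_def U2_def V2_def by auto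
  have EoEd: "Eo \<inter> Ed = {}" unfolding Eo_def Ed_def f_def g_def by auto
  have full: "U2 \<times> V2 \<subseteq> Eo \<union> Ed" unfolding Eo_def Ed_def U2_def V2_def by auto
  have nbOf: "nb Eo (f i) = g ` ({..<n} - {i})" if "i < n" for i
    using that unfolding nb_def Eo_def f_def g_def by auto
  have nbDf: "nb Ed (f i) = {g i}" if "i < n" for i
    using that unfolding nb_def Ed_def f_def g_def by auto
  have nbOg: "nb Eo (g i) = f ` ({..<n} - {i})" if "i < n" for i
    using that unfolding nb_def Eo_def f_def g_def by auto
  have nbDg: "nb Ed (g i) = {f i}" if "i < n" for i
    using that unfolding nb_def Ed_def f_def g_def by auto
  have injf: "inj f" unfolding f_def inj_def by simp
  have injg: "inj g" unfolding g_def inj_def by simp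
  have cO: "inc_deg Eo x = n - 1" and cD: "inc_deg Ed x = 1" if "x \<in> U2 \<union> V2" for x
  proof -
    from that obtain i where i: "i < n" "x = f i \<or> x = g i" unfolding U2_def V2_def by auto
    have "card ({..<n} - {i}) = n - 1" using i by simp
    then show "inc_deg Eo x = n - 1" "inc_deg Ed x = 1" using i nbOf nbOg nbDf nbDg
      by (auto simp: inc_deg_nb card_image inj_on_subset[OF injf] inj_on_subset[OF injg])
  qed
  have conn: "sb_connected U2 V2 (P - {e}) N" if "P \<union> N = Eo \<union> Ed" for P N e
    unfolding sb_connected_def
  proof (intro ballI)
    fix x y assume xy: "x \<in> U2" "y \<in> V2"
    show "(x, y) \<in> ((P - {e} \<union> N) \<union> (P - {e} \<union> N)\<inverse>)\<^sup>*"
    proof (rule complete_minus_conn[where u="f 0" and u'="f 1" and v="g 0" and v'="g 1" and a="fst e" and b="snd e"])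
      show "U2 \<times> V2 - {(fst e, snd e)} \<subseteq> P - {e} \<union> N" using full that by auto
    qed (use xy n2 in \<open>auto simp: U2_def V2_def f_def g_def\<close>)
  qed
  have base: "finite U2" "finite V2" "U2 \<noteq> {}" "V2 \<noteq> {}" unfolding U2_def V2_def using n2 by (auto simp: lessThan_empty_iff)
  show ?thesis
  proof (cases "t \<ge> 0")
    case True
    show ?thesis
    proof (intro exI conjI)
      show "signed_bipartite U2 V2 Eo Ed" unfolding signed_bipartite_def using base UV Eo_sub Ed_sub EoEd by auto
      show "sb_connected U2 V2 (Eo - {(f 0, g 1)}) Ed" by (rule conn) simp
      show "(f 0, g 1) \<in> Eo" unfolding Eo_def using n2 by (intro CollectI exI[of _ 0] exI[of _ 1]) auto
      show "U2 \<union> V2 \<subseteq> {M..}" unfolding U2_def V2_def f_def g_def by auto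
      show "\<forall>x\<in>U2 \<union> V2. sdeg Eo Ed x = t" using cO cD n2 True unfolding sdeg_def n_def by auto
    qed
  next
    case False
    show ?thesis
    proof (intro exI conjI)
      show "signed_bipartite U2 V2 Ed Eo" unfolding signed_bipartite_def using base UV Eo_sub Ed_sub EoEd by auto
      show "sb_connected U2 V2 (Ed - {(f 0, g 0)}) Eo" by (rule conn) auto
      show "(f 0, g 0) \<in> Ed" unfolding Ed_def using n2 by auto
      show "U2 \<union> V2 \<subseteq> {M..}" unfolding U2_def V2_def f_def g_def by auto
      show "\<forall>x\<in>U2 \<union> V2. sdeg Ed Eo x = t" using cO cD n2 False unfolding sdeg_def n_def by auto
    qed
  qed
qed


lemma nb_sub: "E \<subseteq> U \<times> V \<Longrightarrow> nb E x \<subseteq> U \<union> V"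
  unfolding nb_def by auto

lemma glue:
  assumes G: "signed_bipartite U V P N" "sb_connected U V P N" "(u1, v1) \<in> P"
    and H: "signed_bipartite U2 V2 P2 N2" "sb_connected U2 V2 (P2 - {(u2, v2)}) N2" "(u2, v2) \<in> P2"
    and disj: "(U \<union> V) \<inter> (U2 \<union> V2) = {}"
    and P'_def: "P' = (P - {(u1, v1)}) \<union> (P2 - {(u2, v2)}) \<union> {(u1, v2), (u2, v1)}"
    and N'_def: "N' = N \<union> N2"
  shows "signed_bipartite (U \<union> U2) (V \<union> V2) P' N'" "sb_connected (U \<union> U2) (V \<union> V2) P' N'"
    "\<forall>x\<in>U \<union> V. sdeg P' N' x = sdeg P N x" "\<forall>x\<in>U2 \<union> V2. sdeg P' N' x = sdeg P2 N2 x" "P' \<noteq> {}"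
proof -
  have g: "finite U" "finite V" "U \<noteq> {}" "V \<noteq> {}" "U \<inter> V = {}" "P \<subseteq> U \<times> V" "N \<subseteq> U \<times> V" "P \<inter> N = {}"
    using G(1) unfolding signed_bipartite_def by auto
  have h: "finite U2" "finite V2" "U2 \<noteq> {}" "V2 \<noteq> {}" "U2 \<inter> V2 = {}" "P2 \<subseteq> U2 \<times> V2" "N2 \<subseteq> U2 \<times> V2" "P2 \<inter> N2 = {}"
    using H(1) unfolding signed_bipartite_def by auto
  have u1: "u1 \<in> U" "v1 \<in> V" using G(3) g by auto
  have u2: "u2 \<in> U2" "v2 \<in> V2" using H(3) h by auto
  have pP: "a \<in> U \<and> b \<in> V" if "(a, b) \<in> P" for a b using that g(6) by auto
  have pP2: "a \<in> U2 \<and> b \<in> V2" if "(a, b) \<in> P2" for a b using that h(6) by auto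
  have dj: "x \<notin> U2 \<and> x \<notin> V2" if "x \<in> U \<or> x \<in> V" for x using that disj by auto
  have UV1: "x \<notin> V" if "x \<in> U" for x using that g(5) by auto
  have UV2: "x \<notin> V2" if "x \<in> U2" for x using that h(5) by auto
  have nP2: "(x, y) \<notin> P2" "(y, x) \<notin> P2" if "x \<in> U \<union> V" for x y
    using that h(6) disj by auto
  have nP: "(x, y) \<notin> P" "(y, x) \<notin> P" if "x \<in> U2 \<union> V2" for x y
    using that g(6) disj by auto
  have nPU: "(x, y) \<notin> P" if "x \<in> V" for x y using that g(6) g(5) by auto
  have nPV: "(y, x) \<notin> P" if "x \<in> U" for x y using that g(6) g(5) by auto
  have nPU2: "(x, y) \<notin> P2" if "x \<in> V2" for x y using that h(6) h(5) by auto
  have nPV2: "(y, x) \<notin> P2" if "x \<in> U2" for x y using that h(6) h(5) by auto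
  have neq: "u1 \<noteq> u2" "u1 \<noteq> v2" "v1 \<noteq> u2" "v1 \<noteq> v2" "u1 \<noteq> v1" "u2 \<noteq> v2"
    using u1 u2 disj g(5) h(5) by auto
  have outs: "u2 \<notin> U" "u2 \<notin> V" "v2 \<notin> U" "v2 \<notin> V" "u1 \<notin> U2" "u1 \<notin> V2" "v1 \<notin> U2" "v1 \<notin> V2"
    using u1 u2 disj by auto
  show sb: "signed_bipartite (U \<union> U2) (V \<union> V2) P' N'"
    unfolding signed_bipartite_def
  proof (intro conjI)
    show "(U \<union> U2) \<inter> (V \<union> V2) = {}" using g(5) h(5) disj by auto
    show "P' \<subseteq> (U \<union> U2) \<times> (V \<union> V2)" unfolding P'_def using g(6) h(6) u1 u2 by auto
    show "N' \<subseteq> (U \<union> U2) \<times> (V \<union> V2)" unfolding N'_def using g(7) h(7) by auto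
    show "P' \<inter> N' = {}" unfolding P'_def N'_def using g(6-8) h(6-8) disj outs by auto
  qed (use g h in auto)
  show "P' \<noteq> {}" unfolding P'_def by auto
  let ?R = "(P' \<union> N') \<union> (P' \<union> N')\<inverse>"
  have sub1: "(P \<union> N) - {(u1, v1)} \<subseteq> P' \<union> N'" unfolding P'_def N'_def by auto
  have sub2: "(P2 - {(u2, v2)}) \<union> N2 \<subseteq> P' \<union> N'" unfolding P'_def N'_def by auto
  have e1: "(u1, v2) \<in> P' \<union> N'" "(u2, v1) \<in> P' \<union> N'" unfolding P'_def by auto
  have h_conn: "(x, y) \<in> ?R\<^sup>*" if "x \<in> U2" "y \<in> V2" for x y
    using H(2) that sub2 unfolding sb_connected_def by (meson conn_mono)
  have v2u1: "(v2, u1) \<in> ?R\<^sup>*" using e1 by (intro conn_edge) auto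
  have u2v1: "(u2, v1) \<in> ?R\<^sup>*" using e1 by (intro conn_edge) auto
  have v1u1: "(v1, u1) \<in> ?R\<^sup>*"
  proof -
    have "(v1, u2) \<in> ?R\<^sup>*" using u2v1 by (rule conn_sym)
    moreover have "(u2, v2) \<in> ?R\<^sup>*" using h_conn u2 by auto
    ultimately show ?thesis using v2u1 by (meson rtrancl_trans)
  qed
  have allG: "(x, u1) \<in> ?R\<^sup>*" if "x \<in> U \<union> V" for x
  proof -
    let ?E = "P \<union> N"
    have "(x, u1) \<in> (?E \<union> ?E\<inverse>)\<^sup>*"
    proof (cases "x \<in> U")
      case True
      then have "(x, v1) \<in> (?E \<union> ?E\<inverse>)\<^sup>*" using G(2) u1 unfolding sb_connected_def by auto
      moreover have "(v1, u1) \<in> (?E \<union> ?E\<inverse>)\<^sup>*" using G(3) by (intro conn_edge) auto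
      ultimately show ?thesis by (meson rtrancl_trans)
    next
      case False
      then have "x \<in> V" using that by auto
      then have "(u1, x) \<in> (?E \<union> ?E\<inverse>)\<^sup>*" using G(2) u1 unfolding sb_connected_def by auto
      then show ?thesis by (rule conn_sym)
    qed
    from conn_remove[OF this, of u1 v1]
    have "(x, u1) \<in> ?R\<^sup>* \<or> (x, v1) \<in> ?R\<^sup>*" using sub1 by (meson conn_mono)
    then show ?thesis using v1u1 by (meson rtrancl_trans)
  qed
  have allH: "(x, u1) \<in> ?R\<^sup>*" if "x \<in> U2 \<union> V2" for x
  proof (cases "x \<in> U2")
    case True
    then have "(x, v2) \<in> ?R\<^sup>*" using h_conn u2 by auto
    then show ?thesis using v2u1 by (meson rtrancl_trans)
  next
    case False
    then have "(u2, x) \<in> ?R\<^sup>*" using h_conn u2 that by auto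
    then have "(x, u2) \<in> ?R\<^sup>*" by (rule conn_sym)
    moreover have "(u2, u1) \<in> ?R\<^sup>*" using u2v1 v1u1 by (meson rtrancl_trans)
    ultimately show ?thesis by (meson rtrancl_trans)
  qed
  show "sb_connected (U \<union> U2) (V \<union> V2) P' N'"
    unfolding sb_connected_def
  proof (intro ballI)
    fix x y assume "x \<in> U \<union> U2" "y \<in> V \<union> V2"
    then have "(x, u1) \<in> ?R\<^sup>*" "(y, u1) \<in> ?R\<^sup>*" using allG allH by auto
    then show "(x, y) \<in> ?R\<^sup>*" by (meson conn_sym rtrancl_trans)
  qed
  have finnb: "finite (nb P x)" "finite (nb P2 x)" for x
    using nb_sub[OF g(6)] nb_sub[OF h(6)] g h by (meson finite_Un finite_subset)+
  have nbN: "nb N' x = nb N x" if "x \<in> U \<union> V" for x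
    using that disj h(7) unfolding nb_def N'_def by auto
  have nbN2: "nb N' x = nb N2 x" if "x \<in> U2 \<union> V2" for x
    using that disj g(7) unfolding nb_def N'_def by auto
  have nbP_u1: "nb P' u1 = insert v2 (nb P u1 - {v1})"
    unfolding nb_def P'_def using u1 u2 neq by (auto simp: nP nP2 nPU nPV nPU2 nPV2)
  have nbP_v1: "nb P' v1 = insert u2 (nb P v1 - {u1})"
    unfolding nb_def P'_def using u1 u2 neq by (auto simp: nP nP2 nPU nPV nPU2 nPV2)
  have nbP_o: "nb P' x = nb P x" if "x \<in> U \<union> V" "x \<noteq> u1" "x \<noteq> v1" for x
    unfolding nb_def P'_def using that u1 u2 neq outs by (auto simp: nP nP2 nPU nPV nPU2 nPV2)
  have nbP2_u2: "nb P' u2 = insert v1 (nb P2 u2 - {v2})"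
    unfolding nb_def P'_def using u1 u2 neq by (auto simp: nP nP2 nPU nPV nPU2 nPV2)
  have nbP2_v2: "nb P' v2 = insert u1 (nb P2 v2 - {u2})"
    unfolding nb_def P'_def using u1 u2 neq by (auto simp: nP nP2 nPU nPV nPU2 nPV2)
  have nbP2_o: "nb P' x = nb P2 x" if "x \<in> U2 \<union> V2" "x \<noteq> u2" "x \<noteq> v2" for x
    unfolding nb_def P'_def using that u1 u2 neq outs by (auto simp: nP nP2 nPU nPV nPU2 nPV2)
  have cswap: "card (insert b (A - {a})) = card A" if "finite A" "a \<in> A" "b \<notin> A" for A :: "nat set" and a b
    using that by (simp add: card_insert_if card_Diff_singleton) (metis card_0_eq empty_iff Suc_pred neq0_conv)
  have inP1: "v1 \<in> nb P u1" "u1 \<in> nb P v1" using G(3) unfolding nb_def by auto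
  have inP2: "v2 \<in> nb P2 u2" "u2 \<in> nb P2 v2" using H(3) unfolding nb_def by auto
  have notin1: "v2 \<notin> nb P u1" "u2 \<notin> nb P v1" using nb_sub[OF g(6)] u2 disj by auto
  have notin2: "v1 \<notin> nb P2 u2" "u1 \<notin> nb P2 v2" using nb_sub[OF h(6)] u1 disj by auto
  show "\<forall>x\<in>U \<union> V. sdeg P' N' x = sdeg P N x"
  proof
    fix x assume x: "x \<in> U \<union> V"
    have "inc_deg P' x = inc_deg P x"
      unfolding inc_deg_nb
      using nbP_u1 nbP_v1 nbP_o[OF x] cswap finnb inP1 notin1 by (cases "x = u1"; cases "x = v1") auto
    then show "sdeg P' N' x = sdeg P N x" unfolding sdeg_def inc_deg_nb nbN[OF x] by simp
  qed
  show "\<forall>x\<in>U2 \<union> V2. sdeg P' N' x = sdeg P2 N2 x"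
  proof
    fix x assume x: "x \<in> U2 \<union> V2"
    have "inc_deg P' x = inc_deg P2 x"
      unfolding inc_deg_nb
      using nbP2_u2 nbP2_v2 nbP2_o[OF x] cswap finnb inP2 notin2 by (cases "x = u2"; cases "x = v2") auto
    then show "sdeg P' N' x = sdeg P2 N2 x" unfolding sdeg_def inc_deg_nb nbN2[OF x] by simp
  qed
qed


lemma main_aux:
  fixes S :: "int set"
  assumes "finite S" and "S \<noteq> {}"
  shows "\<exists>U V P N. signed_bipartite U V P N \<and> sb_connected U V P N
                   \<and> signed_degree_set U V P N = S \<and> P \<noteq> {}"
  using assms
proof (induction S rule: finite_ne_induct)
  case (singleton t)
  obtain U2 V2 P2 N2 u2 v2 where H: "signed_bipartite U2 V2 P2 N2" "sb_connected U2 V2 (P2 - {(u2,v2)}) N2"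
     "(u2, v2) \<in> P2" "\<forall>x\<in>U2 \<union> V2. sdeg P2 N2 x = t"
    using gadget[where t=t and M=0] by blast
  have "sb_connected U2 V2 P2 N2"
    using H(2) unfolding sb_connected_def by (meson conn_mono Diff_subset Un_mono order_refl)
  moreover have "signed_degree_set U2 V2 P2 N2 = {t}"
    using H(1,4) unfolding signed_degree_set_def signed_bipartite_def by auto
  ultimately show ?case using H by blast
next
  case (insert t S)
  then obtain U V P N where G: "signed_bipartite U V P N" "sb_connected U V P N"
      "signed_degree_set U V P N = S" "P \<noteq> {}" by blast
  have fin: "finite (U \<union> V)" using G(1) unfolding signed_bipartite_def by auto
  define M where "M = Suc (Max (U \<union> V))"
  have lessM: "x < M" if "x \<in> U \<union> V" for x using Max_ge[OF fin that] unfolding M_def by simp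
  obtain U2 V2 P2 N2 u2 v2 where H: "signed_bipartite U2 V2 P2 N2" "sb_connected U2 V2 (P2 - {(u2,v2)}) N2"
     "(u2, v2) \<in> P2" "U2 \<union> V2 \<subseteq> {M..}" "\<forall>x\<in>U2 \<union> V2. sdeg P2 N2 x = t"
    using gadget[where t=t and M=M] by blast
  have disj: "(U \<union> V) \<inter> (U2 \<union> V2) = {}" using lessM H(4) by force
  obtain u1 v1 where e: "(u1, v1) \<in> P" using G(4) by auto
  define P' where "P' = (P - {(u1, v1)}) \<union> (P2 - {(u2, v2)}) \<union> {(u1, v2), (u2, v1)}"
  define N' where "N' = N \<union> N2"
  note gl = glue[OF G(1,2) e H(1,2,3) disj P'_def N'_def]
  have "signed_degree_set (U \<union> U2) (V \<union> V2) P' N' = sdeg P' N' ` (U \<union> V) \<union> sdeg P' N' ` (U2 \<union> V2)"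
    unfolding signed_degree_set_def by auto
  also have "\<dots> = sdeg P N ` (U \<union> V) \<union> sdeg P2 N2 ` (U2 \<union> V2)"
    using gl(3,4) by (metis image_cong)
  also have "sdeg P2 N2 ` (U2 \<union> V2) = {t}"
    using H(1,5) unfolding signed_bipartite_def by auto
  finally have "signed_degree_set (U \<union> U2) (V \<union> V2) P' N' = insert t S"
    using G(3) unfolding signed_degree_set_def by auto
  then show ?case using gl(1,2,5) by blast
qed

theorem theorem2p2:
  fixes S :: "int set"
  assumes "finite S" and "S \<noteq> {}"
  shows "\<exists>U V P N. signed_bipartite U V P N \<and> sb_connected U V P N
                   \<and> signed_degree_set U V P N = S"
  using main_aux[OF assms] by blast

end
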